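(* Let $\Sigma=(X,\mathcal{S},\phi)$ be a forward complete dynamical system whose transition map $\phi$ is $\mathcal{S}$-uniformly continuous. Assume $\Sigma$ is USGES, and let $r\mapsto M(r)>0$, $r\mapsto\lambda(r)>0$ be functions such that $\|\phi(t,x,\sigma)\|\le M(r)e^{-\lambda(r)t}\|x\|$ for all $r>0$, $t\ge0$, $x\in B_X(0,r)$, $\sigma\in\mathcal{S}$. Then for every $r>0$ there exist $\underline{c}_r,\overline{c}_r>0$ and a continuous functional $V_r:X\to\mathbb{R}_+$ such that $$\underline{c}_r\|x\|\le V_r(x)\le\overline{c}_r\|x\|\quad\forall x\in B_X(0,r),$$ $$\overline{D}_\sigma V_r(x)\le-\|x\|\quad\forall x\in B_X(0,r),\ \forall\sigma\in\mathcal{S},$$ and $V_r=V_R$ on $X$ for every $R>0$ such that $\lambda(r)=\lambda(R)$ and $M(r)=M(R)$. Moreover, if $\phi$ is $\mathcal{S}$-uniformly Lipschitz continuous (respectively, $\mathcal{S}$-uniformly Lipschitz continuous on bounded sets), then $V_r$ can be taken Lipschitz continuous (respectively, Lipschitz continuous on bounded sets).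
   Context: $(X,\|\cdot\|)$ is a Banach space and $B_X(x,r)$ is the closed ball of center $x$ and radius $r$. Let $\mathcal{Q}$ be a nonempty set and $\mathcal{S}$ a set of functions $\sigma:\mathbb{R}_+\to\mathcal{Q}$ closed by time-shift (for $\sigma\in\mathcal{S}$, $\tau\ge0$, $\mathbb{T}_\tau\sigma:s\mapsto\sigma(\tau+s)$ is in $\mathcal{S}$) and by concatenation (for $\sigma_1,\sigma_2\in\mathcal{S}$, $\tau>0$, the function equal to $\sigma_1$ on $[0,\tau]$ and with $\sigma(\tau+t)=\sigma_2(t)$ for $t>0$ is in $\mathcal{S}$). A triple $\Sigma=(X,\mathcal{S},\phi)$ with $\phi:\mathbb{R}_+\times X\times\mathcal{S}\to X$ is a forward complete dynamical system if: $\phi(0,x,\sigma)=x$; $\phi(t,x,\tilde\sigma)=\phi(t,x,\sigma)$ whenever $\tilde\sigma=\sigma$ on $[0,t]$; $t\mapsto\phi(t,x,\sigma)$ is continuous; $\phi(\tau,\phi(t,x,\sigma),\mathbb{T}_t\sigma)=\phi(t+\tau,x,\sigma)$ for all $t,\tau\ge0$. $\Sigma$ is USGES if for every $r>0$ there exist $M(r),\lambda(r)>0$ with $\|\phi(t,x,\sigma)\|\le M(r)e^{-\lambda(r)t}\|x\|$ for all $t\ge0$, $x\in B_X(0,r)$, $\sigma\in\mathcal{S}$. The upper Dini derivative is $\overline{D}_\sigma V(x)=\limsup_{h\downarrow0}\frac1h\big(V(\phi(h,x,\sigma))-V(x)\big)$. $\phi$ is $\mathcal{S}$-uniformly continuous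 if for every $\bar t>0$, $x\in X$, $\varepsilon>0$ there is $\eta>0$ with $\|\phi(t,x,\sigma)-\phi(t,y,\sigma)\|\le\varepsilon$ for all $t\in[0,\bar t]$, $y\in B_X(x,\eta)$, $\sigma\in\mathcal{S}$. $\phi$ is $\mathcal{S}$-uniformly Lipschitz continuous if for every $\bar t>0$ there is $l(\bar t)>0$ with $\|\phi(t,x,\sigma)-\phi(t,y,\sigma)\|\le l(\bar t)\|x-y\|$ for all $t\in[0,\bar t]$, $x,y\in X$, $\sigma\in\mathcal{S}$; it is $\mathcal{S}$-uniformly Lipschitz continuous on bounded sets if for every $\bar t,R>0$ there is $l(\bar t,R)>0$ with the same inequality for all $t\in[0,\bar t]$, $x,y\in B_X(0,R)$, $\sigma\in\mathcal{S}$. *)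

theory Defs
  imports "HOL-Analysis.Analysis"
begin

text \<open>Input signals sigma : R_+ -> Q are represented as functions real => 'q;
  only their values on [0, inf) are relevant.\<close>

definition tshift :: "real \<Rightarrow> (real \<Rightarrow> 'q) \<Rightarrow> (real \<Rightarrow> 'q)" where
  "tshift \<tau> \<sigma> = (\<lambda>s. \<sigma> (\<tau> + s))"

definition concat_sig :: "(real \<Rightarrow> 'q) \<Rightarrow> real \<Rightarrow> (real \<Rightarrow> 'q) \<Rightarrow> (real \<Rightarrow> 'q)" where
  "concat_sig \<sigma>1 \<tau> \<sigma>2 = (\<lambda>t. if t \<le> \<tau> then \<sigma>1 t else \<sigma>2 (t - \<tau>))"

definition admissible_inputs :: "(real \<Rightarrow> 'q) set \<Rightarrow> bool" where
  "admissible_inputs S \<longleftrightarrow>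
     (\<forall>\<sigma>\<in>S. \<forall>\<tau>\<ge>0. tshift \<tau> \<sigma> \<in> S) \<and>
     (\<forall>\<sigma>1\<in>S. \<forall>\<sigma>2\<in>S. \<forall>\<tau>>0. concat_sig \<sigma>1 \<tau> \<sigma>2 \<in> S)"

definition forward_complete_sys ::
  "(real \<Rightarrow> 'q) set \<Rightarrow> (real \<Rightarrow> 'x::real_normed_vector \<Rightarrow> (real \<Rightarrow> 'q) \<Rightarrow> 'x) \<Rightarrow> bool" where
  "forward_complete_sys S \<phi> \<longleftrightarrow>
     admissible_inputs S \<and>
     (\<forall>x. \<forall>\<sigma>\<in>S. \<phi> 0 x \<sigma> = x) \<and>
     (\<forall>t\<ge>0. \<forall>x. \<forall>\<sigma>\<in>S. \<forall>\<sigma>'\<in>S. (\<forall>s\<in>{0..t}. \<sigma>' s = \<sigma> s) \<longrightarrow> \<phi> t x \<sigma>' = \<phi> t x \<sigma>) \<and>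
     (\<forall>x. \<forall>\<sigma>\<in>S. continuous_on {0..} (\<lambda>t. \<phi> t x \<sigma>)) \<and>
     (\<forall>t\<ge>0. \<forall>\<tau>\<ge>0. \<forall>x. \<forall>\<sigma>\<in>S. \<phi> \<tau> (\<phi> t x \<sigma>) (tshift t \<sigma>) = \<phi> (t + \<tau>) x \<sigma>)"

definition USGES ::
  "(real \<Rightarrow> 'q) set \<Rightarrow> (real \<Rightarrow> 'x::real_normed_vector \<Rightarrow> (real \<Rightarrow> 'q) \<Rightarrow> 'x) \<Rightarrow> bool" where
  "USGES S \<phi> \<longleftrightarrow> (\<forall>r>0. \<exists>M>0. \<exists>lam>0. \<forall>t\<ge>0. \<forall>x\<in>cball 0 r. \<forall>\<sigma>\<in>S.
      norm (\<phi> t x \<sigma>) \<le> M * exp (- lam * t) * norm x)"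

definition S_unif_cont ::
  "(real \<Rightarrow> 'q) set \<Rightarrow> (real \<Rightarrow> 'x::real_normed_vector \<Rightarrow> (real \<Rightarrow> 'q) \<Rightarrow> 'x) \<Rightarrow> bool" where
  "S_unif_cont S \<phi> \<longleftrightarrow> (\<forall>tb>0. \<forall>x. \<forall>\<epsilon>>0. \<exists>\<eta>>0. \<forall>t\<in>{0..tb}. \<forall>y\<in>cball x \<eta>. \<forall>\<sigma>\<in>S.
      norm (\<phi> t x \<sigma> - \<phi> t y \<sigma>) \<le> \<epsilon>)"

definition S_unif_lip ::
  "(real \<Rightarrow> 'q) set \<Rightarrow> (real \<Rightarrow> 'x::real_normed_vector \<Rightarrow> (real \<Rightarrow> 'q) \<Rightarrow> 'x) \<Rightarrow> bool" where
  "S_unif_lip S \<phi> \<longleftrightarrow> (\<forall>tb>0. \<exists>l>0. \<forall>t\<in>{0..tb}. \<forall>x y. \<forall>\<sigma>\<in>S.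
      norm (\<phi> t x \<sigma> - \<phi> t y \<sigma>) \<le> l * norm (x - y))"

definition S_unif_lip_bdd ::
  "(real \<Rightarrow> 'q) set \<Rightarrow> (real \<Rightarrow> 'x::real_normed_vector \<Rightarrow> (real \<Rightarrow> 'q) \<Rightarrow> 'x) \<Rightarrow> bool" where
  "S_unif_lip_bdd S \<phi> \<longleftrightarrow> (\<forall>tb>0. \<forall>R>0. \<exists>l>0. \<forall>t\<in>{0..tb}. \<forall>x\<in>cball 0 R. \<forall>y\<in>cball 0 R. \<forall>\<sigma>\<in>S.
      norm (\<phi> t x \<sigma> - \<phi> t y \<sigma>) \<le> l * norm (x - y))"

definition dini_upper ::
  "(real \<Rightarrow> 'x \<Rightarrow> (real \<Rightarrow> 'q) \<Rightarrow> 'x) \<Rightarrow> ('x \<Rightarrow> real) \<Rightarrow> (real \<Rightarrow> 'q) \<Rightarrow> 'x \<Rightarrow> ereal" where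
  "dini_upper \<phi> V \<sigma> x = Limsup (at_right 0) (\<lambda>h. ereal ((V (\<phi> h x \<sigma>) - V x) / h))"

definition lyap_family ::
  "(real \<Rightarrow> 'q) set \<Rightarrow> (real \<Rightarrow> 'x::real_normed_vector \<Rightarrow> (real \<Rightarrow> 'q) \<Rightarrow> 'x) \<Rightarrow>
   (real \<Rightarrow> real) \<Rightarrow> (real \<Rightarrow> real) \<Rightarrow> (real \<Rightarrow> 'x \<Rightarrow> real) \<Rightarrow> bool" where
  "lyap_family S \<phi> M lam V \<longleftrightarrow> (\<forall>r>0.
      continuous_on UNIV (V r) \<and> (\<forall>x. V r x \<ge> 0) \<and>
      (\<exists>cl>0. \<exists>cu>0. \<forall>x\<in>cball 0 r. cl * norm x \<le> V r x \<and> V r x \<le> cu * norm x) \<and>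
      (\<forall>x\<in>cball 0 r. \<forall>\<sigma>\<in>S. dini_upper \<phi> (V r) \<sigma> x \<le> ereal (- norm x)) \<and>
      (\<forall>R>0. lam r = lam R \<and> M r = M R \<longrightarrow> V r = V R))"

end

theory Submission
  imports Defs "HOL-Analysis.Analysis"
begin


lemma fc_unfold:
  assumes "forward_complete_sys S \<phi>"
  shows fc_tshift: "\<And>\<sigma> \<tau>. \<sigma> \<in> S \<Longrightarrow> \<tau> \<ge> 0 \<Longrightarrow> tshift \<tau> \<sigma> \<in> S"
    and fc_concat: "\<And>\<sigma>1 \<sigma>2 \<tau>. \<sigma>1 \<in> S \<Longrightarrow> \<sigma>2 \<in> S \<Longrightarrow> \<tau> > 0 \<Longrightarrow> concat_sig \<sigma>1 \<tau> \<sigma>2 \<in> S"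
    and fc_init: "\<And>x \<sigma>. \<sigma> \<in> S \<Longrightarrow> \<phi> 0 x \<sigma> = x"
    and fc_causal: "\<And>t x \<sigma> \<sigma>'. t \<ge> 0 \<Longrightarrow> \<sigma> \<in> S \<Longrightarrow> \<sigma>' \<in> S \<Longrightarrow> (\<forall>s\<in>{0..t}. \<sigma>' s = \<sigma> s) \<Longrightarrow> \<phi> t x \<sigma>' = \<phi> t x \<sigma>"
    and fc_cont: "\<And>x \<sigma>. \<sigma> \<in> S \<Longrightarrow> continuous_on {0..} (\<lambda>t. \<phi> t x \<sigma>)"
    and fc_cocycle: "\<And>t \<tau> x \<sigma>. t \<ge> 0 \<Longrightarrow> \<tau> \<ge> 0 \<Longrightarrow> \<sigma> \<in> S \<Longrightarrow> \<phi> \<tau> (\<phi> t x \<sigma>) (tshift t \<sigma>) = \<phi> (t + \<tau>) x \<sigma>"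
  using assms unfolding forward_complete_sys_def admissible_inputs_def by blast+

lemma agree_pos:
  fixes \<phi> :: "real \<Rightarrow> 'x::real_normed_vector \<Rightarrow> (real \<Rightarrow> 'q) \<Rightarrow> 'x"
  assumes fc: "forward_complete_sys S \<phi>" and uc: "S_unif_cont S \<phi>"
    and t: "t > 0" and r1: "\<rho>1 \<in> S" and r2: "\<rho>2 \<in> S"
    and ag: "\<forall>s. 0 < s \<and> s \<le> t \<longrightarrow> \<rho>1 s = \<rho>2 s"
  shows "\<phi> t y \<rho>1 = \<phi> t y \<rho>2"
proof -
  have key: "norm (\<phi> t y \<rho>1 - \<phi> t y \<rho>2) \<le> 2 * e" if e: "e > 0" for e
  proof -
    obtain \<eta> where eta: "\<eta> > 0" and H: "\<forall>t'\<in>{0..t}. \<forall>z\<in>cball y \<eta>. \<forall>\<rho>\<in>S. norm (\<phi> t' y \<rho> - \<phi> t' z \<rho>) \<le> e"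
      using uc t e unfolding S_unif_cont_def by blast
    have c1: "continuous_on {0..} (\<lambda>s. \<phi> s y \<rho>1)" and c2: "continuous_on {0..} (\<lambda>s. \<phi> s y \<rho>2)"
      using fc_cont[OF fc] r1 r2 by auto
    obtain d1 where d1: "d1 > 0" "\<forall>s\<in>{0..}. dist s 0 < d1 \<longrightarrow> dist (\<phi> s y \<rho>1) (\<phi> 0 y \<rho>1) < \<eta>"
      using c1 eta unfolding continuous_on_iff by (metis atLeast_iff order_refl)
    obtain d2 where d2: "d2 > 0" "\<forall>s\<in>{0..}. dist s 0 < d2 \<longrightarrow> dist (\<phi> s y \<rho>2) (\<phi> 0 y \<rho>2) < \<eta>"
      using c2 eta unfolding continuous_on_iff by (metis atLeast_iff order_refl)
    define \<epsilon> where "\<epsilon> = min t (min d1 d2) / 2"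
    have ep: "\<epsilon> > 0" "\<epsilon> < t" "\<epsilon> < d1" "\<epsilon> < d2" using t d1 d2 by (auto simp: \<epsilon>_def)
    define z1 where "z1 = \<phi> \<epsilon> y \<rho>1"
    define z2 where "z2 = \<phi> \<epsilon> y \<rho>2"
    have z1: "z1 \<in> cball y \<eta>" using d1 ep fc_init[OF fc r1, of y]
      by (auto simp: z1_def dist_commute less_imp_le)
    have z2: "z2 \<in> cball y \<eta>" using d2 ep fc_init[OF fc r2, of y]
      by (auto simp: z2_def dist_commute less_imp_le)
    define \<rho> where "\<rho> = tshift \<epsilon> \<rho>1"
    have rho: "\<rho> \<in> S" using fc_tshift[OF fc r1, of \<epsilon>] ep by (simp add: \<rho>_def)
    have rho2: "tshift \<epsilon> \<rho>2 \<in> S" using fc_tshift[OF fc r2, of \<epsilon>] ep by simp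
    have e1: "\<phi> t y \<rho>1 = \<phi> (t - \<epsilon>) z1 \<rho>"
      using fc_cocycle[OF fc, of \<epsilon> "t - \<epsilon>" \<rho>1 y] ep r1 by (simp add: z1_def \<rho>_def)
    have e2': "\<phi> t y \<rho>2 = \<phi> (t - \<epsilon>) z2 (tshift \<epsilon> \<rho>2)"
      using fc_cocycle[OF fc, of \<epsilon> "t - \<epsilon>" \<rho>2 y] ep r2 by (simp add: z2_def)
    have "\<phi> (t - \<epsilon>) z2 (tshift \<epsilon> \<rho>2) = \<phi> (t - \<epsilon>) z2 \<rho>"
      using fc_causal[OF fc, of "t - \<epsilon>" \<rho> "tshift \<epsilon> \<rho>2" z2] ep rho rho2 ag
      by (auto simp: \<rho>_def tshift_def)
    with e2' have e2: "\<phi> t y \<rho>2 = \<phi> (t - \<epsilon>) z2 \<rho>" by simp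
    have tt: "t - \<epsilon> \<in> {0..t}" using ep by auto
    have n1: "norm (\<phi> (t - \<epsilon>) y \<rho> - \<phi> (t - \<epsilon>) z1 \<rho>) \<le> e" using H tt z1 rho by blast
    have n2: "norm (\<phi> (t - \<epsilon>) y \<rho> - \<phi> (t - \<epsilon>) z2 \<rho>) \<le> e" using H tt z2 rho by blast
    have "norm (\<phi> t y \<rho>1 - \<phi> t y \<rho>2) \<le> norm (\<phi> (t - \<epsilon>) y \<rho> - \<phi> (t - \<epsilon>) z1 \<rho>) + norm (\<phi> (t - \<epsilon>) y \<rho> - \<phi> (t - \<epsilon>) z2 \<rho>)"
    proof -
      have "\<phi> (t - \<epsilon>) z1 \<rho> - \<phi> (t - \<epsilon>) z2 \<rho> = (\<phi> (t - \<epsilon>) y \<rho> - \<phi> (t - \<epsilon>) z2 \<rho>) - (\<phi> (t - \<epsilon>) y \<rho> - \<phi> (t - \<epsilon>) z1 \<rho>)"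
        by simp
      then show ?thesis unfolding e1 e2 using norm_triangle_ineq4 by (metis add.commute)
    qed
    then show ?thesis using n1 n2 by simp
  qed
  show ?thesis
  proof (rule ccontr)
    assume "\<phi> t y \<rho>1 \<noteq> \<phi> t y \<rho>2"
    then have p: "norm (\<phi> t y \<rho>1 - \<phi> t y \<rho>2) > 0" by simp
    from key[of "norm (\<phi> t y \<rho>1 - \<phi> t y \<rho>2) / 4"] p show False by simp
  qed
qed

lemma concat_flow:
  fixes \<phi> :: "real \<Rightarrow> 'x::real_normed_vector \<Rightarrow> (real \<Rightarrow> 'q) \<Rightarrow> 'x"
  assumes fc: "forward_complete_sys S \<phi>" and uc: "S_unif_cont S \<phi>"
    and h: "h > 0" and t: "t \<ge> 0" and s1: "\<sigma> \<in> S" and s2: "\<sigma>' \<in> S"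
  shows "\<phi> t (\<phi> h x \<sigma>) \<sigma>' = \<phi> (h + t) x (concat_sig \<sigma> h \<sigma>')"
proof -
  define \<sigma>'' where "\<sigma>'' = concat_sig \<sigma> h \<sigma>'"
  have s3: "\<sigma>'' \<in> S" using fc_concat[OF fc s1 s2 h] by (simp add: \<sigma>''_def)
  have s4: "tshift h \<sigma>'' \<in> S" using fc_tshift[OF fc s3] h by simp
  have a: "\<phi> h x \<sigma>'' = \<phi> h x \<sigma>"
    using fc_causal[OF fc, of h \<sigma> \<sigma>'' x] h s1 s3 by (auto simp: \<sigma>''_def concat_sig_def)
  have b: "\<phi> t z (tshift h \<sigma>'') = \<phi> t z \<sigma>'" for z
  proof (cases "t = 0")
    case True then show ?thesis using fc_init[OF fc s4] fc_init[OF fc s2] by simp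
  next
    case False
    then show ?thesis using agree_pos[OF fc uc _ s4 s2] t
      by (auto simp: \<sigma>''_def concat_sig_def tshift_def)
  qed
  show ?thesis using fc_cocycle[OF fc, of h t \<sigma>'' x] h t s3 a b by (simp add: \<sigma>''_def)
qed



definition Jset :: "(real \<Rightarrow> 'q) set \<Rightarrow> real \<Rightarrow> real \<Rightarrow> (real \<times> (real \<Rightarrow> 'q)) option set" where
  "Jset S m l = insert None (Some ` ({0..2*m/l} \<times> S))"

definition Fj :: "(real \<Rightarrow> 'x::real_normed_vector \<Rightarrow> (real \<Rightarrow> 'q) \<Rightarrow> 'x) \<Rightarrow> real \<Rightarrow> 'x \<Rightarrow> (real \<times> (real \<Rightarrow> 'q)) option \<Rightarrow> real" where
  "Fj \<phi> l x j = (case j of None \<Rightarrow> norm x | Some p \<Rightarrow> exp (l/2 * fst p) * norm (\<phi> (fst p) x (snd p)))"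

definition V0 :: "(real \<Rightarrow> 'x::real_normed_vector \<Rightarrow> (real \<Rightarrow> 'q) \<Rightarrow> 'x) \<Rightarrow> (real \<Rightarrow> 'q) set \<Rightarrow> real \<Rightarrow> real \<Rightarrow> 'x \<Rightarrow> real" where
  "V0 \<phi> S m l x = (SUP j\<in>Jset S m l. Fj \<phi> l x j)"

lemma Jset_cases:
  assumes "j \<in> Jset S m l"
  obtains "j = None" | t \<sigma> where "j = Some (t, \<sigma>)" "0 \<le> t" "t \<le> 2*m/l" "\<sigma> \<in> S"
  using assms unfolding Jset_def by auto

lemma Jset_ne: "Jset S m l \<noteq> {}" by (simp add: Jset_def)

lemma sup_diff:
  fixes f g :: "'a \<Rightarrow> real"
  assumes "J \<noteq> {}" "bdd_above (f ` J)" "bdd_above (g ` J)" "\<forall>j\<in>J. \<bar>f j - g j\<bar> \<le> d"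
  shows "\<bar>(SUP j\<in>J. f j) - (SUP j\<in>J. g j)\<bar> \<le> d"
proof -
  have "(SUP j\<in>J. f j) \<le> (SUP j\<in>J. g j) + d"
  proof (rule cSUP_least[OF assms(1)])
    fix j assume j: "j \<in> J"
    have "g j \<le> (SUP j\<in>J. g j)" by (rule cSUP_upper[OF j assms(3)])
    then show "f j \<le> (SUP j\<in>J. g j) + d" using assms(4) j by force
  qed
  moreover have "(SUP j\<in>J. g j) \<le> (SUP j\<in>J. f j) + d"
  proof (rule cSUP_least[OF assms(1)])
    fix j assume j: "j \<in> J"
    have "f j \<le> (SUP j\<in>J. f j)" by (rule cSUP_upper[OF j assms(2)])
    then show "g j \<le> (SUP j\<in>J. f j) + d" using assms(4) j by force
  qed
  ultimately show ?thesis by linarith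
qed

context
  fixes S :: "(real \<Rightarrow> 'q) set"
    and \<phi> :: "real \<Rightarrow> 'x::real_normed_vector \<Rightarrow> (real \<Rightarrow> 'q) \<Rightarrow> 'x"
    and M lam :: "real \<Rightarrow> real"
  assumes Mpos: "\<forall>r>0. M r > 0" and lampos: "\<forall>r>0. lam r > 0"
    and bound: "\<forall>r>0. \<forall>t\<ge>0. \<forall>x\<in>cball 0 r. \<forall>\<sigma>\<in>S.
                  norm (\<phi> t x \<sigma>) \<le> M r * exp (- lam r * t) * norm x"
begin

lemma flow_le:
  assumes "r > 0" "t \<ge> 0" "norm x \<le> r" "\<sigma> \<in> S"
  shows "norm (\<phi> t x \<sigma>) \<le> M r * norm x"
proof -
  have "norm (\<phi> t x \<sigma>) \<le> M r * exp (- lam r * t) * norm x" using bound assms by auto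
  also have "\<dots> \<le> M r * 1 * norm x"
    using assms Mpos lampos by (intro mult_right_mono mult_left_mono) auto
  finally show ?thesis by simp
qed

lemma Fj_bdd:
  assumes l: "l > 0"
  shows "bdd_above (Fj \<phi> l x ` Jset S m l)"
proof -
  define R where "R = norm x + 1"
  have R: "R > 0" "norm x \<le> R" by (auto simp: R_def add_nonneg_pos)
  define B where "B = max (norm x) (exp (l/2 * (2*m/l)) * (M R * norm x))"
  show ?thesis unfolding bdd_above_def
  proof (intro exI ballI)
    fix v assume "v \<in> Fj \<phi> l x ` Jset S m l"
    then obtain j where j: "j \<in> Jset S m l" and v: "v = Fj \<phi> l x j" by auto
    from j show "v \<le> B"
    proof (cases rule: Jset_cases)
      case 1 then show ?thesis by (simp add: v Fj_def B_def)
    next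
      case (2 t \<sigma>)
      have a: "norm (\<phi> t x \<sigma>) \<le> M R * norm x" using flow_le[OF R(1) 2(2) R(2) 2(4)] .
      have b: "exp (l/2 * t) \<le> exp (l/2 * (2*m/l))" using 2 l by (simp add: field_simps)
      have "v = exp (l/2 * t) * norm (\<phi> t x \<sigma>)" by (simp add: v Fj_def 2)
      also have "\<dots> \<le> exp (l/2 * (2*m/l)) * (M R * norm x)"
        using a b by (intro mult_mono) auto
      finally show ?thesis by (simp add: B_def)
    qed
  qed
qed

lemma Fj_le_V0:
  assumes "l > 0" "j \<in> Jset S m l"
  shows "Fj \<phi> l x j \<le> V0 \<phi> S m l x"
  unfolding V0_def by (rule cSUP_upper[OF assms(2) Fj_bdd[OF assms(1)]])

lemma norm_le_V0:
  assumes "l > 0"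
  shows "norm x \<le> V0 \<phi> S m l x"
  using Fj_le_V0[OF assms, where j=None and x=x and m=m] by (simp add: Jset_def Fj_def)

lemma V0_upper:
  assumes r: "r > 0" and x: "norm x \<le> r"
  shows "V0 \<phi> S (M r) (lam r) x \<le> max 1 (M r) * norm x"
  unfolding V0_def
proof (rule cSUP_least[OF Jset_ne])
  fix j assume j: "j \<in> Jset S (M r) (lam r)"
  have l: "lam r > 0" and m: "M r > 0" using r lampos Mpos by auto
  from j show "Fj \<phi> (lam r) x j \<le> max 1 (M r) * norm x"
  proof (cases rule: Jset_cases)
    case 1
    have "1 * norm x \<le> max 1 (M r) * norm x" by (intro mult_right_mono) auto
    then show ?thesis by (simp add: Fj_def 1)
  next
    case (2 t \<sigma>)
    have a: "norm (\<phi> t x \<sigma>) \<le> M r * exp (- lam r * t) * norm x" using bound r x 2 by auto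
    have "Fj \<phi> (lam r) x j = exp (lam r/2 * t) * norm (\<phi> t x \<sigma>)" by (simp add: Fj_def 2)
    also have "\<dots> \<le> exp (lam r/2 * t) * (M r * exp (- lam r * t) * norm x)"
      using a by (intro mult_left_mono) auto
    also have "\<dots> = M r * exp (- (lam r/2 * t)) * norm x"
      by (simp add: algebra_simps flip: exp_add)
    also have "\<dots> \<le> M r * 1 * norm x"
      using l m 2 by (intro mult_right_mono mult_left_mono) auto
    also have "\<dots> \<le> max 1 (M r) * norm x" by (intro mult_right_mono) auto
    finally show ?thesis .
  qed
qed

lemma tail_le:
  assumes r: "r > 0" and x: "norm x \<le> r" and t: "t \<ge> 0" and s: "\<sigma> \<in> S"
  shows "exp (lam r/2 * t) * norm (\<phi> t x \<sigma>) \<le> V0 \<phi> S (M r) (lam r) x"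
proof -
  have l: "lam r > 0" and m: "M r > 0" using r lampos Mpos by auto
  show ?thesis
  proof (cases "t \<le> 2 * M r / lam r")
    case True
    then have "Some (t, \<sigma>) \<in> Jset S (M r) (lam r)" using t s by (auto simp: Jset_def)
    from Fj_le_V0[OF l this, of x] show ?thesis by (simp add: Fj_def)
  next
    case False
    have a: "norm (\<phi> t x \<sigma>) \<le> M r * exp (- lam r * t) * norm x" using bound r x t s by auto
    have "M r \<le> exp (M r)" using exp_ge_add_one_self[of "M r"] by linarith
    also have "exp (M r) \<le> exp (lam r / 2 * t)"
      using False l by (simp add: field_simps)
    finally have me: "M r \<le> exp (lam r / 2 * t)" .
    have "exp (lam r/2 * t) * norm (\<phi> t x \<sigma>) \<le> exp (lam r/2 * t) * (M r * exp (- lam r * t) * norm x)"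
      using a by (intro mult_left_mono) auto
    also have "\<dots> = (M r * exp (- (lam r/2 * t))) * norm x"
      by (simp add: algebra_simps flip: exp_add)
    also have "\<dots> \<le> 1 * norm x"
    proof (intro mult_right_mono)
      have "M r * exp (- (lam r/2 * t)) \<le> exp (lam r / 2 * t) * exp (- (lam r/2 * t))"
        using me by (intro mult_right_mono) auto
      also have "\<dots> = 1" by (simp flip: exp_add)
      finally show "M r * exp (- (lam r/2 * t)) \<le> 1" .
    qed auto
    also have "\<dots> \<le> V0 \<phi> S (M r) (lam r) x" using norm_le_V0[OF l] by simp
    finally show ?thesis .
  qed
qed


lemma Fj_diff_None: "\<bar>Fj \<phi> l x None - Fj \<phi> l y None\<bar> \<le> norm (x - y)"
  by (simp add: Fj_def norm_triangle_ineq3)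

lemma Fj_diff_Some:
  assumes "0 \<le> t" "t \<le> T" "l > 0"
  shows "\<bar>Fj \<phi> l x (Some (t, \<sigma>)) - Fj \<phi> l y (Some (t, \<sigma>))\<bar> \<le> exp (l/2 * T) * norm (\<phi> t x \<sigma> - \<phi> t y \<sigma>)"
proof -
  have "\<bar>Fj \<phi> l x (Some (t, \<sigma>)) - Fj \<phi> l y (Some (t, \<sigma>))\<bar> = exp (l/2 * t) * \<bar>norm (\<phi> t x \<sigma>) - norm (\<phi> t y \<sigma>)\<bar>"
    by (simp add: Fj_def abs_mult flip: right_diff_distrib)
  also have "\<dots> \<le> exp (l/2 * T) * norm (\<phi> t x \<sigma> - \<phi> t y \<sigma>)"
    using assms by (intro mult_mono norm_triangle_ineq3) auto
  finally show ?thesis .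
qed

lemma V0_diff:
  assumes "l > 0" "\<forall>j\<in>Jset S m l. \<bar>Fj \<phi> l x j - Fj \<phi> l y j\<bar> \<le> d"
  shows "\<bar>V0 \<phi> S m l x - V0 \<phi> S m l y\<bar> \<le> d"
  unfolding V0_def using sup_diff[OF Jset_ne Fj_bdd[OF assms(1)] Fj_bdd[OF assms(1)] assms(2)] .

lemma V0_lip:
  assumes l: "l > 0" and c: "c \<ge> 0"
    and H: "\<forall>t\<in>{0..2*m/l}. \<forall>x\<in>B. \<forall>y\<in>B. \<forall>\<sigma>\<in>S. norm (\<phi> t x \<sigma> - \<phi> t y \<sigma>) \<le> c * norm (x - y)"
    and x: "x \<in> B" and y: "y \<in> B"
  shows "\<bar>V0 \<phi> S m l x - V0 \<phi> S m l y\<bar> \<le> max 1 (exp (l/2 * (2*m/l)) * c) * norm (x - y)"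
proof (rule V0_diff[OF l], intro ballI)
  fix j assume j: "j \<in> Jset S m l"
  have n: "norm (x - y) \<le> max 1 (exp (l/2 * (2*m/l)) * c) * norm (x - y)"
    using mult_right_mono[of 1 "max 1 (exp (l/2 * (2*m/l)) * c)" "norm (x - y)"] by simp
  from j show "\<bar>Fj \<phi> l x j - Fj \<phi> l y j\<bar> \<le> max 1 (exp (l/2 * (2*m/l)) * c) * norm (x - y)"
  proof (cases rule: Jset_cases)
    case 1 then show ?thesis using Fj_diff_None[of l x y] n by simp
  next
    case (2 t \<sigma>)
    have "\<bar>Fj \<phi> l x j - Fj \<phi> l y j\<bar> \<le> exp (l/2 * (2*m/l)) * norm (\<phi> t x \<sigma> - \<phi> t y \<sigma>)"
      using Fj_diff_Some[OF 2(2) 2(3) l] 2(1) by simp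
    also have "\<dots> \<le> exp (l/2 * (2*m/l)) * (c * norm (x - y))"
      using H 2 x y by (intro mult_left_mono) auto
    also have "\<dots> = (exp (l/2 * (2*m/l)) * c) * norm (x - y)" by simp
    also have "\<dots> \<le> max 1 (exp (l/2 * (2*m/l)) * c) * norm (x - y)"
      by (intro mult_right_mono) auto
    finally show ?thesis .
  qed
qed

context
  assumes fc: "forward_complete_sys S \<phi>" and uc: "S_unif_cont S \<phi>"
begin

lemma V0_cont:
  assumes l: "l > 0" and m: "m > 0"
  shows "continuous_on UNIV (V0 \<phi> S m l)"
  unfolding continuous_on_iff
proof (intro ballI allI impI)
  fix x :: 'x and e :: real assume e: "e > 0"
  define T where "T = 2*m/l"
  have T: "T > 0" using l m by (simp add: T_def)
  define K where "K = exp (l/2 * T)"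
  have K: "K > 0" by (simp add: K_def)
  obtain \<eta> where eta: "\<eta> > 0" and H: "\<forall>t\<in>{0..T}. \<forall>y\<in>cball x \<eta>. \<forall>\<sigma>\<in>S. norm (\<phi> t x \<sigma> - \<phi> t y \<sigma>) \<le> e / (2*K)"
  proof -
    have "e / (2*K) > 0" using e K by simp
    then show ?thesis using that uc T unfolding S_unif_cont_def by blast
  qed
  show "\<exists>d>0. \<forall>x'\<in>UNIV. dist x' x < d \<longrightarrow> dist (V0 \<phi> S m l x') (V0 \<phi> S m l x) < e"
  proof (intro exI conjI ballI impI)
    show "min \<eta> (e/2) > 0" using eta e by simp
    fix x' assume d: "dist x' x < min \<eta> (e/2)"
    have xc: "x' \<in> cball x \<eta>" using d by (simp add: dist_commute)
    have "\<bar>V0 \<phi> S m l x' - V0 \<phi> S m l x\<bar> \<le> e/2"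
    proof (rule V0_diff[OF l], intro ballI)
      fix j assume j: "j \<in> Jset S m l"
      from j show "\<bar>Fj \<phi> l x' j - Fj \<phi> l x j\<bar> \<le> e/2"
      proof (cases rule: Jset_cases)
        case 1 then show ?thesis using Fj_diff_None[of l x' x] d by (simp add: dist_norm)
      next
        case (2 t \<sigma>)
        have "\<bar>Fj \<phi> l x' j - Fj \<phi> l x j\<bar> \<le> K * norm (\<phi> t x' \<sigma> - \<phi> t x \<sigma>)"
          using Fj_diff_Some[OF 2(2) _ l, of T] 2 by (simp add: K_def T_def)
        also have "\<dots> \<le> K * (e / (2*K))"
          using H 2 xc K by (intro mult_left_mono) (auto simp: T_def norm_minus_commute)
        also have "\<dots> = e/2" using K by simp
        finally show ?thesis .
      qed
    qed
    then show "dist (V0 \<phi> S m l x') (V0 \<phi> S m l x) < e" using e by (simp add: dist_real_def)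
  qed
qed

lemma V0_decrease:
  assumes r: "r > 0" and x: "norm x \<le> r" and s: "\<sigma> \<in> S" and h: "h > 0"
  shows "V0 \<phi> S (M r) (lam r) (\<phi> h x \<sigma>) \<le> exp (- (lam r/2 * h)) * V0 \<phi> S (M r) (lam r) x"
  unfolding V0_def[of _ _ _ _ "\<phi> h x \<sigma>"]
proof (rule cSUP_least[OF Jset_ne])
  fix j assume j: "j \<in> Jset S (M r) (lam r)"
  have l: "lam r > 0" using r lampos by auto
  let ?V = "V0 \<phi> S (M r) (lam r) x"
  have ee: "exp (- (lam r/2 * h)) * exp (lam r/2 * h) = 1" by (simp flip: exp_add)
  from j show "Fj \<phi> (lam r) (\<phi> h x \<sigma>) j \<le> exp (- (lam r/2 * h)) * ?V"
  proof (cases rule: Jset_cases)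
    case 1
    have "Fj \<phi> (lam r) (\<phi> h x \<sigma>) j = (exp (- (lam r/2 * h)) * exp (lam r/2 * h)) * norm (\<phi> h x \<sigma>)"
      unfolding ee by (simp add: Fj_def 1)
    also have "\<dots> = exp (- (lam r/2 * h)) * (exp (lam r/2 * h) * norm (\<phi> h x \<sigma>))"
      by (rule mult.assoc)
    also have "\<dots> \<le> exp (- (lam r/2 * h)) * ?V"
      using tail_le[OF r x _ s, of h] h by (intro mult_left_mono) auto
    finally show ?thesis .
  next
    case (2 t \<sigma>')
    have cf: "\<phi> t (\<phi> h x \<sigma>) \<sigma>' = \<phi> (h + t) x (concat_sig \<sigma> h \<sigma>')"
      using concat_flow[OF fc uc h 2(2) s 2(4)] .
    have cs: "concat_sig \<sigma> h \<sigma>' \<in> S" using fc_concat[OF fc s 2(4) h] .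
    have ex: "exp (lam r/2 * t) = exp (- (lam r/2 * h)) * exp (lam r/2 * (h + t))"
      by (simp add: algebra_simps flip: exp_add)
    have "Fj \<phi> (lam r) (\<phi> h x \<sigma>) j = exp (- (lam r/2 * h)) * (exp (lam r/2 * (h + t)) * norm (\<phi> (h + t) x (concat_sig \<sigma> h \<sigma>')))"
    proof -
      have "Fj \<phi> (lam r) (\<phi> h x \<sigma>) j = exp (lam r/2 * t) * norm (\<phi> (h + t) x (concat_sig \<sigma> h \<sigma>'))"
        by (simp add: Fj_def 2 cf)
      then show ?thesis unfolding ex by (rule trans) (rule mult.assoc)
    qed
    also have "\<dots> \<le> exp (- (lam r/2 * h)) * ?V"
      using tail_le[OF r x _ cs, of "h + t"] h 2 by (intro mult_left_mono) auto
    finally show ?thesis .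
  qed
qed


lemma dini_V:
  assumes r: "r > 0" and x: "norm x \<le> r" and s: "\<sigma> \<in> S"
  shows "dini_upper \<phi> (\<lambda>y. 2 / lam r * V0 \<phi> S (M r) (lam r) y) \<sigma> x \<le> ereal (- norm x)"
proof -
  define l where "l = lam r"
  have l: "l > 0" using r lampos by (simp add: l_def)
  define W where "W = (\<lambda>y. 2 / lam r * V0 \<phi> S (M r) (lam r) y)"
  define c where "c = 2 / l * V0 \<phi> S (M r) (lam r) x"
  have lim: "((\<lambda>h. (exp (- (l/2*h)) - 1)/h) \<longlongrightarrow> -(l/2)) (at_right 0)"
  proof -
    have "((\<lambda>h. exp (- (l/2*h))) has_field_derivative -(l/2)) (at 0 within {0<..})"
      by (auto intro!: derivative_eq_intros)
    then show ?thesis by (simp add: has_field_derivative_iff)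
  qed
  have lim2: "((\<lambda>h. ereal (c * ((exp (- (l/2*h)) - 1)/h))) \<longlongrightarrow> ereal (c * -(l/2))) (at_right 0)"
    by (intro tendsto_intros lim)
  have ev: "eventually (\<lambda>h. ereal ((W (\<phi> h x \<sigma>) - W x) / h) \<le> ereal (c * ((exp (- (l/2*h)) - 1)/h))) (at_right 0)"
    unfolding eventually_at_right_field
  proof (intro exI conjI allI impI)
    show "(0::real) < 1" by simp
    fix h :: real assume h: "0 < h"
    have "W (\<phi> h x \<sigma>) - W x = 2 / l * (V0 \<phi> S (M r) (lam r) (\<phi> h x \<sigma>) - V0 \<phi> S (M r) (lam r) x)"
      by (simp add: W_def l_def right_diff_distrib)
    also have "\<dots> \<le> 2 / l * (exp (- (l/2 * h)) * V0 \<phi> S (M r) (lam r) x - V0 \<phi> S (M r) (lam r) x)"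
      using V0_decrease[OF r x s h] l by (intro mult_left_mono) (auto simp: l_def)
    also have "\<dots> = c * (exp (- (l/2*h)) - 1)" unfolding c_def by algebra
    finally have "(W (\<phi> h x \<sigma>) - W x) / h \<le> c * (exp (- (l/2*h)) - 1) / h"
      using h by (intro divide_right_mono) auto
    then show "ereal ((W (\<phi> h x \<sigma>) - W x) / h) \<le> ereal (c * ((exp (- (l/2*h)) - 1)/h))"
      by simp
  qed
  have "dini_upper \<phi> W \<sigma> x \<le> Limsup (at_right 0) (\<lambda>h. ereal (c * ((exp (- (l/2*h)) - 1)/h)))"
    unfolding dini_upper_def by (rule Limsup_mono[OF ev])
  also have "\<dots> = ereal (c * -(l/2))"
    by (rule lim_imp_Limsup[OF trivial_limit_at_right_real lim2])
  also have "c * -(l/2) = - V0 \<phi> S (M r) (lam r) x" using l by (simp add: c_def)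
  also have "ereal (- V0 \<phi> S (M r) (lam r) x) \<le> ereal (- norm x)"
    using norm_le_V0[of "lam r" x "M r"] l by (simp add: l_def)
  finally show ?thesis by (simp add: W_def)
qed
end

end


lemma lip_scale:
  fixes f :: "'a::metric_space \<Rightarrow> real"
  assumes l: "l > 0" and K: "K \<ge> 0" and H: "\<forall>x\<in>B. \<forall>y\<in>B. \<bar>f x - f y\<bar> \<le> K * dist x y"
  shows "(2 / l * K)-lipschitz_on B (\<lambda>y. 2 / l * f y)"
proof (rule lipschitz_onI)
  fix x y assume "x \<in> B" "y \<in> B"
  then have "\<bar>f x - f y\<bar> \<le> K * dist x y" using H by blast
  then have "2 / l * \<bar>f x - f y\<bar> \<le> 2 / l * (K * dist x y)" using l by (intro mult_left_mono) auto
  then show "dist (2 / l * f x) (2 / l * f y) \<le> 2 / l * K * dist x y"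
  proof -
    have "dist (2 / l * f x) (2 / l * f y) = 2 / l * \<bar>f x - f y\<bar>"
      using l unfolding dist_real_def right_diff_distrib[symmetric] abs_mult by simp
    then show ?thesis using \<open>2 / l * \<bar>f x - f y\<bar> \<le> 2 / l * (K * dist x y)\<close> by simp
  qed
next
  show "0 \<le> 2 / l * K" using l K by simp
qed


theorem theorem5:
  fixes S :: "(real \<Rightarrow> 'q) set"
    and \<phi> :: "real \<Rightarrow> 'x::banach \<Rightarrow> (real \<Rightarrow> 'q) \<Rightarrow> 'x"
    and M lam :: "real \<Rightarrow> real"
  assumes fc: "forward_complete_sys S \<phi>"
    and uc: "S_unif_cont S \<phi>"
    and usges: "USGES S \<phi>"
    and Mpos: "\<forall>r>0. M r > 0" and lampos: "\<forall>r>0. lam r > 0"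
    and bound: "\<forall>r>0. \<forall>t\<ge>0. \<forall>x\<in>cball 0 r. \<forall>\<sigma>\<in>S.
                  norm (\<phi> t x \<sigma>) \<le> M r * exp (- lam r * t) * norm x"
  shows "(\<exists>V. lyap_family S \<phi> M lam V)
       \<and> (S_unif_lip S \<phi> \<longrightarrow>
            (\<exists>V. lyap_family S \<phi> M lam V \<and> (\<forall>r>0. \<exists>L. L-lipschitz_on UNIV (V r))))
       \<and> (S_unif_lip_bdd S \<phi> \<longrightarrow>
            (\<exists>V. lyap_family S \<phi> M lam V \<and>
                 (\<forall>r>0. \<forall>B. bounded B \<longrightarrow> (\<exists>L. L-lipschitz_on B (V r)))))"
proof -
  define V where "V = (\<lambda>r y. 2 / lam r * V0 \<phi> S (M r) (lam r) y)"
  have lyap: "lyap_family S \<phi> M lam V"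
    unfolding lyap_family_def
  proof (rule allI, rule impI, intro conjI)
    fix r :: real assume r: "r > 0"
    have l: "lam r > 0" and m: "M r > 0" using r Mpos lampos by auto
    have nl: "norm x \<le> V0 \<phi> S (M r) (lam r) x" for x
      using norm_le_V0[OF Mpos lampos bound l] by blast
    show "continuous_on UNIV (V r)" unfolding V_def
      using V0_cont[OF Mpos lampos bound fc uc l m] by (intro continuous_intros)
    show "\<forall>x. 0 \<le> V r x"
    proof
      fix x
      have "0 \<le> V0 \<phi> S (M r) (lam r) x" using nl[of x] norm_ge_zero[of x] by linarith
      then show "0 \<le> V r x" using l by (simp add: V_def)
    qed
    show "\<exists>cl>0. \<exists>cu>0. \<forall>x\<in>cball 0 r. cl * norm x \<le> V r x \<and> V r x \<le> cu * norm x"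
    proof (intro exI conjI ballI)
      show "2 / lam r > 0" "2 / lam r * max 1 (M r) > 0" using l by auto
      fix x :: 'x assume x: "x \<in> cball 0 r"
      show "2 / lam r * norm x \<le> V r x" unfolding V_def using nl[of x] l by (intro mult_left_mono) auto
      have "V0 \<phi> S (M r) (lam r) x \<le> max 1 (M r) * norm x"
        using V0_upper[OF Mpos lampos bound r] x by simp
      then show "V r x \<le> 2 / lam r * max 1 (M r) * norm x"
        unfolding V_def using l by (simp add: mult.assoc divide_right_mono)
    qed
    show "\<forall>x\<in>cball 0 r. \<forall>\<sigma>\<in>S. dini_upper \<phi> (V r) \<sigma> x \<le> ereal (- norm x)"
    proof (intro ballI)
      fix x :: 'x and \<sigma> assume "x \<in> cball 0 r" "\<sigma> \<in> S"
      then show "dini_upper \<phi> (V r) \<sigma> x \<le> ereal (- norm x)"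
        using dini_V[OF Mpos lampos bound fc uc r] unfolding V_def by simp
    qed
    show "\<forall>R>0. lam r = lam R \<and> M r = M R \<longrightarrow> V r = V R" by (simp add: V_def)
  qed
  have lip1: "\<forall>r>0. \<exists>L. L-lipschitz_on UNIV (V r)" if SL: "S_unif_lip S \<phi>"
  proof (intro allI impI)
    fix r :: real assume r: "r > 0"
    have l: "lam r > 0" and m: "M r > 0" using r Mpos lampos by auto
    have T: "2 * M r / lam r > 0" using l m by simp
    obtain c where c: "c > 0" and H: "\<forall>t\<in>{0..2 * M r / lam r}. \<forall>x y. \<forall>\<sigma>\<in>S. norm (\<phi> t x \<sigma> - \<phi> t y \<sigma>) \<le> c * norm (x - y)"
      using SL T unfolding S_unif_lip_def by blast
    define K where "K = max 1 (exp (lam r/2 * (2 * M r / lam r)) * c)"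
    have "\<forall>x\<in>UNIV. \<forall>y\<in>UNIV. \<bar>V0 \<phi> S (M r) (lam r) x - V0 \<phi> S (M r) (lam r) y\<bar> \<le> K * dist x y"
      using V0_lip[OF Mpos lampos bound l, where c=c and m="M r" and B=UNIV] c H
      by (simp add: K_def dist_norm)
    from lip_scale[OF l _ this] have "(2 / lam r * K)-lipschitz_on UNIV (V r)"
      unfolding V_def K_def by simp
    then show "\<exists>L. L-lipschitz_on UNIV (V r)" by blast
  qed
  have lip2: "\<forall>r>0. \<forall>B. bounded B \<longrightarrow> (\<exists>L. L-lipschitz_on B (V r))" if SL: "S_unif_lip_bdd S \<phi>"
  proof (intro allI impI)
    fix r :: real and B :: "'x set" assume r: "r > 0" and B: "bounded B"
    obtain R where R: "R > 0" and BR: "\<forall>x\<in>B. norm x \<le> R" using B unfolding bounded_pos by blast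
    have l: "lam r > 0" and m: "M r > 0" using r Mpos lampos by auto
    have T: "2 * M r / lam r > 0" using l m by simp
    obtain c where c: "c > 0" and H: "\<forall>t\<in>{0..2 * M r / lam r}. \<forall>x\<in>cball 0 R. \<forall>y\<in>cball 0 R. \<forall>\<sigma>\<in>S. norm (\<phi> t x \<sigma> - \<phi> t y \<sigma>) \<le> c * norm (x - y)"
      using SL T R unfolding S_unif_lip_bdd_def by blast
    define K where "K = max 1 (exp (lam r/2 * (2 * M r / lam r)) * c)"
    have "\<forall>x\<in>B. \<forall>y\<in>B. \<bar>V0 \<phi> S (M r) (lam r) x - V0 \<phi> S (M r) (lam r) y\<bar> \<le> K * dist x y"
    proof (intro ballI)
      fix x y assume "x \<in> B" "y \<in> B"
      then have "x \<in> cball 0 R" "y \<in> cball 0 R" using BR by auto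
      then show "\<bar>V0 \<phi> S (M r) (lam r) x - V0 \<phi> S (M r) (lam r) y\<bar> \<le> K * dist x y"
        using V0_lip[OF Mpos lampos bound l, where c=c and m="M r" and B="cball 0 R"] c H
        by (simp add: K_def dist_norm)
    qed
    from lip_scale[OF l _ this] have "(2 / lam r * K)-lipschitz_on B (V r)"
      unfolding V_def K_def by simp
    then show "\<exists>L. L-lipschitz_on B (V r)" by blast
  qed
  show ?thesis using lyap lip1 lip2 by blast
qed

end
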